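(* Let $V$ be a finite set, $\mathcal{F}\subseteq 2^V$ a minimal hereditary family with $\delta(\mathcal{F})\ge 12$, and $x\in V$ with $f_3(x)=0$. Then $u(x)\ge 5.3$. Moreover, $u(x)=5.3$ if and only if $f_1(x)=5$, $f_2(x)=6$, and $\omega(x,F\cup\{x\})=\frac{6}{20}$ for every $F\in\mathcal{F}(x)$ with $|F|=2$.
   Context: Let $V$ be a finite set. A family $\mathcal{F}\subseteq 2^V$ is hereditary if $F'\subseteq F\in\mathcal{F}$ implies $F'\in\mathcal{F}$. For $x\in V$: the link is $\mathcal{F}(x)=\{F\setminus\{x\}: x\in F\in\mathcal{F}\}$, $d_{\mathcal{F}}(x)=|\mathcal{F}(x)|$, $\delta(\mathcal{F})=\min_{x\in V}d_{\mathcal{F}}(x)$. For $A\subseteq V$, $d_{\mathcal{F}}(A)=|\{F\in\mathcal{F}: A\subseteq F\}|$. A set $F\in\mathcal{F}$ is maximal if no other member strictly contains it; a hereditary $\mathcal{F}$ with $\delta(\mathcal{F})\ge 12$ is minimal if $\delta(\mathcal{F}\setminus\{F\})\le 11$ for every maximal $F\in\mathcal{F}$. $f_i(x)$ denotes the number of $i$-element sets in $\mathcal{F}(x)$. Weights: for $x\in F\in\mathcal{F}$ define $\omega(x,F)$ as follows. If $|F|\ne 3$, $\omega(x,F)=1/|F|$. If $|F|=3$: if $F$ is contained in some 4-element member of $\mathcal{F}$, every element of $F$ gets $\omega=1/3$; otherwise order the three 2-subsets of $F$ as $e_1,e_2,e_3$ with $d_{\mathcal{F}}(e_1)\le d_{\mathcal{F}}(e_2)\le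 d_{\mathcal{F}}(e_3)$; if $d_{\mathcal{F}}(e_2)\le 4<d_{\mathcal{F}}(e_3)$, the two elements of $e_3$ get $\omega=7/20$ and the element of $F\setminus e_3$ gets $6/20$; else if $d_{\mathcal{F}}(e_1)\le 4<d_{\mathcal{F}}(e_2)$, the two elements of $e_1$ get $7/20$ and the element of $F\setminus e_1$ gets $6/20$; otherwise every element of $F$ gets $1/3$. The weight of $x$ is $u(x)=\sum_{x\in F\in\mathcal{F}}\omega(x,F)$. *)

theory Defs
  imports Complex_Main
begin

definition hereditary :: "'a set set \<Rightarrow> bool" where
  "hereditary \<F> \<longleftrightarrow> (\<forall>F\<in>\<F>. \<forall>F'. F' \<subseteq> F \<longrightarrow> F' \<in> \<F>)"

definition link :: "'a set set \<Rightarrow> 'a \<Rightarrow> 'a set set" where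
  "link \<F> x = {F - {x} | F. F \<in> \<F> \<and> x \<in> F}"

definition deg :: "'a set set \<Rightarrow> 'a \<Rightarrow> nat" where
  "deg \<F> x = card (link \<F> x)"

definition min_deg :: "'a set \<Rightarrow> 'a set set \<Rightarrow> nat" where
  "min_deg V \<F> = Min ((\<lambda>x. deg \<F> x) ` V)"

definition set_deg :: "'a set set \<Rightarrow> 'a set \<Rightarrow> nat" where
  "set_deg \<F> A = card {F \<in> \<F>. A \<subseteq> F}"

definition maximal_in :: "'a set set \<Rightarrow> 'a set \<Rightarrow> bool" where
  "maximal_in \<F> F \<longleftrightarrow> F \<in> \<F> \<and> (\<forall>G\<in>\<F>. F \<subseteq> G \<longrightarrow> G = F)"

definition minimal_family :: "'a set \<Rightarrow> 'a set set \<Rightarrow> bool" where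
  "minimal_family V \<F> \<longleftrightarrow> hereditary \<F> \<and> min_deg V \<F> \<ge> 12 \<and>
     (\<forall>F. maximal_in \<F> F \<longrightarrow> min_deg V (\<F> - {F}) \<le> 11)"

definition f_count :: "'a set set \<Rightarrow> nat \<Rightarrow> 'a \<Rightarrow> nat" where
  "f_count \<F> i x = card {A \<in> link \<F> x. card A = i}"

text \<open>With the 2-subsets
  ordered e1,e2,e3 by nondecreasing d_F, the condition d(e2) <= 4 < d(e3) holds iff
  exactly one pair is high (and then it is e3); the condition d(e1) <= 4 < d(e2)
  holds iff exactly two pairs are high (and then e1 is the unique non-high pair).\<close>
definition high_pairs :: "'a set set \<Rightarrow> 'a set \<Rightarrow> 'a set set" where
  "high_pairs \<F> F = {e. e \<subseteq> F \<and> card e = 2 \<and> set_deg \<F> e > 4}"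

definition low_pairs :: "'a set set \<Rightarrow> 'a set \<Rightarrow> 'a set set" where
  "low_pairs \<F> F = {e. e \<subseteq> F \<and> card e = 2 \<and> set_deg \<F> e \<le> 4}"

definition omega :: "'a set set \<Rightarrow> 'a \<Rightarrow> 'a set \<Rightarrow> real" where
  "omega \<F> x F =
    (if card F \<noteq> 3 then 1 / real (card F)
     else if (\<exists>G\<in>\<F>. card G = 4 \<and> F \<subseteq> G) then 1/3
     else if card (high_pairs \<F> F) = 1 then
       (if x \<in> (THE e. e \<in> high_pairs \<F> F) then 7/20 else 6/20)
     else if card (high_pairs \<F> F) = 2 then
       (if x \<in> (THE e. e \<in> low_pairs \<F> F) then 7/20 else 6/20)
     else 1/3)"

definition weight :: "'a set set \<Rightarrow> 'a \<Rightarrow> real" where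
  "weight \<F> x = (\<Sum>F\<in>{F\<in>\<F>. x \<in> F}. omega \<F> x F)"

end

theory Submission
  imports Defs
begin

lemma omega3_ge: "card F = 3 \<Longrightarrow> omega \<F> x F \<ge> 6/20"
  unfolding omega_def by (auto split: if_splits)

theorem mainTheorem9:
  fixes V :: "'a set" and \<F> :: "'a set set" and x :: 'a
  assumes "finite V"
    and "\<F> \<subseteq> Pow V"
    and "minimal_family V \<F>"
    and "x \<in> V"
    and "f_count \<F> 3 x = 0"
  shows "weight \<F> x \<ge> 53/10 \<and>
    (weight \<F> x = 53/10 \<longleftrightarrow>
       f_count \<F> 1 x = 5 \<and> f_count \<F> 2 x = 6 \<and>
       (\<forall>F\<in>link \<F> x. card F = 2 \<longrightarrow> omega \<F> x (F \<union> {x}) = 6/20))"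
proof -
  define L where "L = link \<F> x"
  have her: "hereditary \<F>" and md: "min_deg V \<F> \<ge> 12"
    using assms(3) unfolding minimal_family_def by auto
  have memL: "A \<in> L \<longleftrightarrow> x \<notin> A \<and> insert x A \<in> \<F>" for A
  proof
    assume "A \<in> L"
    then obtain F where "F \<in> \<F>" "x \<in> F" "A = F - {x}" unfolding L_def link_def by auto
    then show "x \<notin> A \<and> insert x A \<in> \<F>" by (simp add: insert_absorb)
  next
    assume "x \<notin> A \<and> insert x A \<in> \<F>"
    then have "A = insert x A - {x}" by simp
    then show "A \<in> L" unfolding L_def link_def using \<open>x \<notin> A \<and> insert x A \<in> \<F>\<close> by blast
  qed
  have LV: "A \<in> L \<Longrightarrow> A \<subseteq> V" for A using memL assms(2) by blast
  have "L \<subseteq> Pow V" using LV by blast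
  then have finL: "finite L" using assms(1) finite_subset by blast
  have sub: "insert x B \<in> \<F>" if "B \<subseteq> A" "A \<in> L" for A B
  proof -
    have "insert x A \<in> \<F>" using that(2) memL by simp
    moreover have "insert x B \<subseteq> insert x A" using that(1) by blast
    ultimately show ?thesis using her unfolding hereditary_def by blast
  qed
  have subL: "B \<in> L" if "B \<subseteq> A" "A \<in> L" for A B
  proof -
    have "x \<notin> A" using that(2) memL by simp
    then have "x \<notin> B" using that(1) by blast
    then show ?thesis using sub[OF that] memL by simp
  qed
  have degx: "card L \<ge> 12"
  proof -
    have "min_deg V \<F> \<le> deg \<F> x" unfolding min_deg_def
      using assms(1,4) by (intro Min_le) auto
    then show ?thesis using md unfolding deg_def L_def by simp
  qed
  define Li where "Li = (\<lambda>i. {A \<in> L. card A = i})"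
  have fc: "f_count \<F> i x = card (Li i)" for i unfolding f_count_def Li_def L_def by simp
  have L3: "Li 3 = {}" using assms(5) fc[of 3] finL unfolding Li_def by simp
  have le2: "card A \<le> 2" if "A \<in> L" for A
  proof (rule ccontr)
    assume "\<not> ?thesis"
    then obtain B where "B \<subseteq> A" "card B = 3"
      using obtain_subset_with_card_n[of 3 A] by force
    then have "B \<in> Li 3" using subL that unfolding Li_def by auto
    then show False using L3 by simp
  qed
  have Ldec: "L = Li 0 \<union> Li 1 \<union> Li 2"
    using le2 unfolding Li_def by (force simp: le_Suc_eq numeral_2_eq_2)
  have finLi: "finite (Li i)" for i using finL unfolding Li_def by simp
  have emp: "{} \<in> L"
  proof -
    from degx have "L \<noteq> {}" by auto
    then obtain A where "A \<in> L" by auto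
    then show ?thesis using subL by blast
  qed
  have finA: "A \<in> L \<Longrightarrow> finite A" for A using LV assms(1) finite_subset by blast
  have L0: "Li 0 = {{}}"
    using emp finA unfolding Li_def by fastforce
  have cardL: "card L = 1 + card (Li 1) + card (Li 2)"
    unfolding Ldec using finLi L0
    by (subst card_Un_disjoint, auto simp: Li_def card_Un_disjoint)+
  define U where "U = {a. {a} \<in> L}"
  have L1U: "Li 1 = (\<lambda>a. {a}) ` U" unfolding Li_def U_def by (auto simp: card_Suc_eq)
  have cardU: "card (Li 1) = card U" unfolding L1U by (rule card_image) (auto simp: inj_on_def)
  have finU: "finite U" using L1U finLi[of 1] by (metis finite_imageD inj_on_def singleton_inject)
  have "Li 2 \<subseteq> {B. B \<subseteq> U \<and> card B = 2}"
    unfolding Li_def U_def using subL by auto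
  then have "card (Li 2) \<le> card U choose 2"
    using n_subsets[OF finU, of 2] card_mono[OF _ \<open>Li 2 \<subseteq> _\<close>] finU by auto
  then have c2: "card (Li 2) \<le> card (Li 1) * (card (Li 1) - 1) div 2"
    using cardU choose_two by simp
  define f1 where "f1 = card (Li 1)"
  define f2 where "f2 = card (Li 2)"
  have f12: "f1 + f2 \<ge> 11" using cardL degx unfolding f1_def f2_def by simp
  have f1ge: "f1 \<ge> 5"
  proof (rule ccontr)
    assume "\<not> ?thesis"
    then have "f1 \<in> {0,1,2,3,4}" by auto
    then have "f1 * (f1 - 1) div 2 \<le> 6" by auto
    moreover have "f2 \<le> f1 * (f1 - 1) div 2" using c2 unfolding f1_def f2_def .
    ultimately show False using f12 \<open>\<not> 5 \<le> f1\<close> by linarith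
  qed
  define S where "S = (\<Sum>A\<in>Li 2. omega \<F> x (insert x A))"
  have xn: "A \<in> L \<Longrightarrow> x \<notin> A" for A using memL by blast
  have Sge: "omega \<F> x (insert x A) \<ge> 6/20" if "A \<in> Li 2" for A
  proof -
    have "card (insert x A) = 3" using that xn finLi[of 2] unfolding Li_def
      by (auto simp: card_insert_if finA)
    then show ?thesis by (rule omega3_ge)
  qed
  have Sbound: "S \<ge> 6/20 * f2"
    unfolding S_def f2_def using sum_mono[of "Li 2" "\<lambda>_. 6/20" "\<lambda>A. omega \<F> x (insert x A)", OF Sge]
    by simp
  have wt: "weight \<F> x = 1 + f1 / 2 + S"
  proof -
    have set: "{F\<in>\<F>. x \<in> F} = insert x ` L"
    proof
      show "{F\<in>\<F>. x \<in> F} \<subseteq> insert x ` L"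
      proof
        fix F assume "F \<in> {F\<in>\<F>. x \<in> F}"
        then have F: "F \<in> \<F>" "x \<in> F" by auto
        then have "F = insert x (F - {x})" by auto
        moreover have "F - {x} \<in> L" using memL[of "F - {x}"] F calculation by simp
        ultimately show "F \<in> insert x ` L" by blast
      qed
    next
      show "insert x ` L \<subseteq> {F\<in>\<F>. x \<in> F}" using memL by blast
    qed
    have inj: "inj_on (insert x) L"
    proof
      fix A B assume "A \<in> L" "B \<in> L" "insert x A = insert x B"
      then have "insert x A - {x} = insert x B - {x}" by simp
      then show "A = B" using xn \<open>A \<in> L\<close> \<open>B \<in> L\<close> by simp
    qed
    have "weight \<F> x = (\<Sum>A\<in>L. omega \<F> x (insert x A))"
      unfolding weight_def set by (simp add: sum.reindex[OF inj])
    also have "\<dots> = (\<Sum>A\<in>Li 0. omega \<F> x (insert x A)) + (\<Sum>A\<in>Li 1. omega \<F> x (insert x A)) + S"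
      unfolding Ldec S_def using finLi
      by (subst sum.union_disjoint, auto simp: Li_def sum.union_disjoint)+
    also have "(\<Sum>A\<in>Li 0. omega \<F> x (insert x A)) = 1" unfolding L0 omega_def by simp
    also have "(\<Sum>A\<in>Li 1. omega \<F> x (insert x A)) = (\<Sum>A\<in>Li 1. 1/2)"
    proof (rule sum.cong)
      fix A assume A: "A \<in> Li 1"
      then have "x \<notin> A" "card A = 1" "finite A" using xn finA unfolding Li_def by auto
      then have "card (insert x A) = 2" by simp
      then show "omega \<F> x (insert x A) = 1/2" unfolding omega_def by simp
    qed simp
    finally show ?thesis unfolding f1_def by simp
  qed
  have main1: "weight \<F> x \<ge> 53/10"
  proof (cases "f1 = 5")
    case True then show ?thesis using wt Sbound f12 by simp
  next
    case False then have "f1 \<ge> 6" using f1ge by simp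
    then show ?thesis using wt Sbound f12 by linarith
  qed
  have eqS: "(\<forall>A\<in>Li 2. omega \<F> x (insert x A) = 6/20) \<longleftrightarrow> S = 6/20 * f2"
  proof
    assume h: "\<forall>A\<in>Li 2. omega \<F> x (insert x A) = 6/20"
    have "S = (\<Sum>A\<in>Li 2. 6/20)" unfolding S_def using h by (intro sum.cong) auto
    then show "S = 6/20 * f2" unfolding f2_def by simp
  next
    assume h: "S = 6/20 * f2"
    have "(\<Sum>A\<in>Li 2. omega \<F> x (insert x A) - 6/20) = 0"
      using h unfolding S_def f2_def by (simp add: sum_subtractf)
    then have "\<forall>A\<in>Li 2. omega \<F> x (insert x A) - 6/20 = 0"
      using sum_nonneg_eq_0_iff[OF finLi[of 2], of "\<lambda>A. omega \<F> x (insert x A) - 6/20"] Sge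
      by simp
    then show "\<forall>A\<in>Li 2. omega \<F> x (insert x A) = 6/20" by simp
  qed
  have omeq: "(\<forall>F\<in>link \<F> x. card F = 2 \<longrightarrow> omega \<F> x (F \<union> {x}) = 6/20)
      \<longleftrightarrow> (\<forall>A\<in>Li 2. omega \<F> x (insert x A) = 6/20)"
    unfolding Li_def L_def by auto
  have main2: "weight \<F> x = 53/10 \<longleftrightarrow> f1 = 5 \<and> f2 = 6 \<and> S = 6/20 * f2"
  proof
    assume w: "weight \<F> x = 53/10"
    have "f1 = 5"
    proof (rule ccontr)
      assume "f1 \<noteq> 5" then have "f1 \<ge> 6" using f1ge by simp
      then show False using w wt Sbound f12 by linarith
    qed
    moreover have "f2 = 6" using w wt Sbound f12 \<open>f1 = 5\<close> by simp
    ultimately show "f1 = 5 \<and> f2 = 6 \<and> S = 6/20 * f2" using w wt by simp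
  next
    assume "f1 = 5 \<and> f2 = 6 \<and> S = 6/20 * f2"
    then show "weight \<F> x = 53/10" using wt by simp
  qed
  show ?thesis using main1 main2 eqS omeq fc unfolding f1_def f2_def by auto
qed

end
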